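(* Let $\mathcal{C}$ be an isoclinism class of finite-dimensional Lie superalgebras (over a field of characteristic different from $2,3$). Then every $L\in\mathcal{C}$ can be expressed as a direct sum $L=T\oplus A$, where $T$ is a stem Lie superalgebra and $A$ is a finite-dimensional abelian Lie superalgebra.
   Context: Lie superalgebras: $\mathbb{Z}_2$-graded algebras with graded skew-symmetric bracket satisfying the graded Jacobi identity; homomorphisms are even. $Z(L)$ is the center, $L'=[L,L]$; $L$ is stem if $Z(L)\subseteq L'$; abelian means $[L,L]=0$. Two Lie superalgebras $L,M$ are isoclinic if there are isomorphisms $\varphi:L/Z(L)\to M/Z(M)$, $\theta:L'\to M'$ with $\theta([l,m])=[k,r]$ whenever $k+Z(M)=\varphi(l+Z(L))$, $r+Z(M)=\varphi(m+Z(L))$; isoclinism is an equivalence relation whose classes are the isoclinism classes (families). *)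

theory Defs
  imports Complex_Main
begin

text \<open>A Lie superalgebra is modelled on a whole type 'v (an abelian group) with a
scalar multiplication by a field 'k, a Z_2-grading given by two subspaces V0 (even)
and V1 (odd) with 'v = V0 (+) V1 (direct), and a bracket br.\<close>

definition graded_part :: "'v set \<Rightarrow> 'v set \<Rightarrow> nat \<Rightarrow> 'v set" where
  "graded_part V0 V1 i = (if i = 0 then V0 else V1)"

definition lie_superalgebra ::
  "('k::field \<Rightarrow> 'v::ab_group_add \<Rightarrow> 'v) \<Rightarrow> 'v set \<Rightarrow> 'v set \<Rightarrow> ('v \<Rightarrow> 'v \<Rightarrow> 'v) \<Rightarrow> bool" where
  "lie_superalgebra scale V0 V1 br \<longleftrightarrow>
     vector_space scale \<and>
     module.subspace scale V0 \<and> module.subspace scale V1 \<and>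
     V0 \<inter> V1 = {0} \<and> (\<forall>v. \<exists>a\<in>V0. \<exists>b\<in>V1. v = a + b) \<and>
     (\<forall>x y z. br (x + y) z = br x z + br y z \<and> br x (y + z) = br x y + br x z) \<and>
     (\<forall>c x y. br (scale c x) y = scale c (br x y) \<and> br x (scale c y) = scale c (br x y)) \<and>
     (\<forall>i\<in>{0,1}. \<forall>j\<in>{0,1}. \<forall>x\<in>graded_part V0 V1 i. \<forall>y\<in>graded_part V0 V1 j.
        br x y \<in> graded_part V0 V1 ((i + j) mod 2) \<and>
        br x y = - scale ((-1) ^ (i * j)) (br y x)) \<and>
     (\<forall>i\<in>{0,1}. \<forall>j\<in>{0,1}. \<forall>k\<in>{0,1}.
        \<forall>x\<in>graded_part V0 V1 i. \<forall>y\<in>graded_part V0 V1 j. \<forall>z\<in>graded_part V0 V1 k.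
        scale ((-1) ^ (i * k)) (br x (br y z)) + scale ((-1) ^ (j * i)) (br y (br z x))
          + scale ((-1) ^ (k * j)) (br z (br x y)) = 0)"

definition finite_dimensional ::
  "('k::field \<Rightarrow> 'v::ab_group_add \<Rightarrow> 'v) \<Rightarrow> bool" where
  "finite_dimensional scale \<longleftrightarrow> (\<exists>B. finite B \<and> module.span scale B = UNIV)"

definition graded_ideal ::
  "('k::field \<Rightarrow> 'v::ab_group_add \<Rightarrow> 'v) \<Rightarrow> 'v set \<Rightarrow> 'v set \<Rightarrow> ('v \<Rightarrow> 'v \<Rightarrow> 'v) \<Rightarrow> 'v set \<Rightarrow> bool" where
  "graded_ideal scale V0 V1 br I \<longleftrightarrow>
     module.subspace scale I \<and>
     (\<forall>v\<in>I. \<exists>a\<in>I \<inter> V0. \<exists>b\<in>I \<inter> V1. v = a + b) \<and>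
     (\<forall>x y. y \<in> I \<longrightarrow> br x y \<in> I)"

definition center_on :: "('v::ab_group_add \<Rightarrow> 'v \<Rightarrow> 'v) \<Rightarrow> 'v set \<Rightarrow> 'v set" where
  "center_on br S = {x \<in> S. \<forall>y\<in>S. br x y = 0}"

definition derived_on ::
  "('k::field \<Rightarrow> 'v::ab_group_add \<Rightarrow> 'v) \<Rightarrow> ('v \<Rightarrow> 'v \<Rightarrow> 'v) \<Rightarrow> 'v set \<Rightarrow> 'v set" where
  "derived_on scale br S = module.span scale {br x y | x y. x \<in> S \<and> y \<in> S}"

definition stem_on ::
  "('k::field \<Rightarrow> 'v::ab_group_add \<Rightarrow> 'v) \<Rightarrow> ('v \<Rightarrow> 'v \<Rightarrow> 'v) \<Rightarrow> 'v set \<Rightarrow> bool" where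
  "stem_on scale br S \<longleftrightarrow> center_on br S \<subseteq> derived_on scale br S"

definition abelian_on :: "('v::ab_group_add \<Rightarrow> 'v \<Rightarrow> 'v) \<Rightarrow> 'v set \<Rightarrow> bool" where
  "abelian_on br S \<longleftrightarrow> (\<forall>x\<in>S. \<forall>y\<in>S. br x y = 0)"

end

theory Submission
  imports Defs
begin

context vector_space begin

lemma indep_disjoint_span:
  assumes "independent (P \<union> Q)" "P \<inter> Q = {}" "x \<in> span P" "x \<in> span Q"
  shows "x = 0"
proof -
  obtain S1 a where S1: "finite S1" "S1 \<subseteq> P" "x = (\<Sum>v\<in>S1. a v *s v)"
    using assms(3) unfolding span_explicit by blast
  obtain S2 b where S2: "finite S2" "S2 \<subseteq> Q" "x = (\<Sum>v\<in>S2. b v *s v)"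
    using assms(4) unfolding span_explicit by blast
  define c where "c v = (if v \<in> S1 then a v else - b v)" for v
  have dis: "S1 \<inter> S2 = {}" using S1 S2 assms(2) by blast
  have "(\<Sum>v\<in>S1 \<union> S2. c v *s v) = (\<Sum>v\<in>S1. c v *s v) + (\<Sum>v\<in>S2. c v *s v)"
    using S1 S2 dis by (simp add: sum.union_disjoint)
  also have "(\<Sum>v\<in>S1. c v *s v) = x" using S1 by (simp add: c_def)
  also have "(\<Sum>v\<in>S2. c v *s v) = (\<Sum>v\<in>S2. - (b v *s v))"
    using dis by (intro sum.cong) (auto simp: c_def)
  also have "\<dots> = - x" using S2 by (simp add: sum_negf)
  finally have z: "(\<Sum>v\<in>S1 \<union> S2. c v *s v) = 0" by simp
  have "\<And>v. v \<in> S1 \<Longrightarrow> a v = 0"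
  proof -
    fix v assume "v \<in> S1"
    then have "c v = 0" using independentD[OF assms(1) _ _ z] S1 S2 by blast
    then show "a v = 0" using \<open>v \<in> S1\<close> by (simp add: c_def)
  qed
  then show ?thesis using S1 by simp
qed

lemma indep_union:
  assumes "independent P" "independent Q" "span P \<inter> span Q \<subseteq> {0}"
  shows "independent (P \<union> Q)"
  unfolding independent_explicit_module
proof (intro allI impI)
  fix t u v assume t: "finite t" "t \<subseteq> P \<union> Q" "(\<Sum>v\<in>t. u v *s v) = 0" "v \<in> t"
  let ?s1 = "(\<Sum>v\<in>t \<inter> P. u v *s v)" and ?s2 = "(\<Sum>v\<in>t - P. u v *s v)"
  have e: "?s1 + ?s2 = 0" using t sum.Int_Diff[OF t(1), of "\<lambda>v. u v *s v" P] by simp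
  have s1: "?s1 \<in> span P" by (intro span_sum span_scale span_base) auto
  have s2: "?s2 \<in> span Q" using t(2) by (intro span_sum span_scale span_base) auto
  have "?s1 = - ?s2" using e by (simp add: eq_neg_iff_add_eq_0)
  then have "?s1 \<in> span Q" using s2 span_neg by simp
  then have z1: "?s1 = 0" using s1 assms(3) by blast
  then have z2: "?s2 = 0" using e by simp
  show "u v = 0"
  proof (cases "v \<in> P")
    case True
    then show ?thesis using independentD[OF assms(1) _ _ z1] t by blast
  next
    case False
    then show ?thesis using independentD[OF assms(2) _ _ z2] t by blast
  qed
qed

lemma complement_subspace:
  assumes "subspace U" "subspace W" "subspace X" "U \<subseteq> W" "X \<subseteq> W" "U \<inter> X \<subseteq> {0}"
  shows "\<exists>T. subspace T \<and> U \<subseteq> T \<and> T \<subseteq> W \<and> T \<inter> X \<subseteq> {0} \<and> (\<forall>w\<in>W. \<exists>t\<in>T. \<exists>x\<in>X. w = t + x)"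
proof -
  obtain BU where BU: "BU \<subseteq> U" "independent BU" "U \<subseteq> span BU"
    by (rule maximal_independent_subset)
  obtain BX where BX: "BX \<subseteq> X" "independent BX" "X \<subseteq> span BX"
    by (rule maximal_independent_subset)
  have spU: "span BU = U" by (rule span_subspace[OF BU(1) BU(3) assms(1)])
  have spX: "span BX = X" by (rule span_subspace[OF BX(1) BX(3) assms(3)])
  have "span BU \<inter> span BX \<subseteq> {0}" unfolding spU spX by (rule assms(6))
  then have ind: "independent (BU \<union> BX)" by (rule indep_union[OF BU(2) BX(2)])
  have UW: "BU \<union> BX \<subseteq> W" using BU(1) BX(1) assms(4,5) by blast
  obtain B where B: "BU \<union> BX \<subseteq> B" "B \<subseteq> W" "independent B" "W \<subseteq> span B"
    by (rule maximal_independent_subset_extend[OF UW ind])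
  have 0: "0 \<notin> BU" using BU(2) dependent_zero by blast
  have dis: "BU \<inter> BX = {}" using BU(1) BX(1) assms(6) 0 by blast
  define T where "T = span (B - BX)"
  have BB: "B = (B - BX) \<union> BX" using B(1) by blast
  have indB': "independent ((B - BX) \<union> BX)" by (rule independent_mono[OF B(3)]) (use B(1) in blast)
  show ?thesis
  proof (intro exI[of _ T] conjI ballI)
    show "subspace T" unfolding T_def by (rule subspace_span)
    have "BU \<subseteq> B - BX" using B(1) dis by blast
    then have "span BU \<subseteq> T" unfolding T_def by (rule span_mono)
    then show "U \<subseteq> T" unfolding spU .
    have "B - BX \<subseteq> W" using B(2) by blast
    then show "T \<subseteq> W" unfolding T_def by (rule span_minimal[OF _ assms(2)])
    show "T \<inter> X \<subseteq> {0}"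
    proof
      fix x assume x: "x \<in> T \<inter> X"
      then have x1: "x \<in> span (B - BX)" unfolding T_def by blast
      have x2: "x \<in> span BX" using x unfolding spX by blast
      have "x = 0" by (rule indep_disjoint_span[OF indB' _ x1 x2]) blast
      then show "x \<in> {0}" by simp
    qed
    fix w assume "w \<in> W"
    then have "w \<in> span B" using B(4) by blast
    moreover have "span B = span ((B - BX) \<union> BX)" by (rule arg_cong[OF BB])
    ultimately have "w \<in> span ((B - BX) \<union> BX)" by simp
    then obtain t x where tx: "t \<in> span (B - BX)" "x \<in> span BX" "w = t + x"
      unfolding span_Un by blast
    show "\<exists>t\<in>T. \<exists>x\<in>X. w = t + x"
      using tx unfolding T_def spX by blast
  qed
qed

lemma two_complements:
  assumes "subspace S" "subspace Z" "Z \<subseteq> S" "subspace D"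
  shows "\<exists>A T. subspace A \<and> subspace T \<and> A \<subseteq> Z \<and> A \<inter> D \<subseteq> {0} \<and>
     (\<forall>z\<in>Z. \<exists>a\<in>A. \<exists>d\<in>D \<inter> S. z = a + d) \<and> D \<inter> S \<subseteq> T \<and> T \<subseteq> S \<and> T \<inter> A \<subseteq> {0} \<and>
     (\<forall>v\<in>S. \<exists>t\<in>T. \<exists>a\<in>A. v = t + a)"
proof -
  have ZD: "subspace (Z \<inter> D)" by (rule subspace_inter[OF assms(2,4)])
  have z0: "{0} \<subseteq> Z" using subspace_0[OF assms(2)] by blast
  have c1: "\<exists>T. subspace T \<and> {0} \<subseteq> T \<and> T \<subseteq> Z \<and> T \<inter> (Z \<inter> D) \<subseteq> {0} \<and>
      (\<forall>w\<in>Z. \<exists>t\<in>T. \<exists>x\<in>Z \<inter> D. w = t + x)"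
    by (rule complement_subspace[OF subspace_single_0 assms(2) ZD z0]) blast+
  then obtain A where A: "subspace A" "A \<subseteq> Z" "A \<inter> (Z \<inter> D) \<subseteq> {0}"
     "\<forall>w\<in>Z. \<exists>t\<in>A. \<exists>x\<in>Z \<inter> D. w = t + x"
    by (elim exE conjE) blast
  have AD: "A \<inter> D \<subseteq> {0}" using A(2,3) by blast
  have DS: "subspace (D \<inter> S)" by (rule subspace_inter[OF assms(4,1)])
  have AS: "A \<subseteq> S" using A(2) assms(3) by (rule order_trans)
  have DSA: "D \<inter> S \<inter> A \<subseteq> {0}" using AD by blast
  have c2: "\<exists>T. subspace T \<and> D \<inter> S \<subseteq> T \<and> T \<subseteq> S \<and> T \<inter> A \<subseteq> {0} \<and>
      (\<forall>w\<in>S. \<exists>t\<in>T. \<exists>x\<in>A. w = t + x)"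
    by (rule complement_subspace[OF DS assms(1) A(1) _ AS DSA]) blast
  then obtain T where T: "subspace T" "D \<inter> S \<subseteq> T" "T \<subseteq> S" "T \<inter> A \<subseteq> {0}"
     "\<forall>w\<in>S. \<exists>t\<in>T. \<exists>x\<in>A. w = t + x"
    by (elim exE conjE) blast
  have Z: "\<forall>z\<in>Z. \<exists>a\<in>A. \<exists>d\<in>D \<inter> S. z = a + d"
  proof
    fix z assume "z \<in> Z"
    then obtain a d where "a \<in> A" "d \<in> Z \<inter> D" "z = a + d" using A(4) by blast
    then show "\<exists>a\<in>A. \<exists>d\<in>D \<inter> S. z = a + d" using assms(3) by blast
  qed
  show ?thesis
    apply (rule exI[of _ A], rule exI[of _ T])
    apply (intro conjI)
    by (fact A(1) T(1) A(2) AD Z T(2) T(3) T(4) T(5))+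
qed

end


theorem theorem3p7:
  fixes scale :: "'k::field \<Rightarrow> 'v::ab_group_add \<Rightarrow> 'v"
    and V0 V1 :: "'v set" and br :: "'v \<Rightarrow> 'v \<Rightarrow> 'v"
  assumes "(2::'k) \<noteq> 0" and "(3::'k) \<noteq> 0"
    and "lie_superalgebra scale V0 V1 br"
    and "finite_dimensional scale"
  shows "\<exists>T A. graded_ideal scale V0 V1 br T \<and> graded_ideal scale V0 V1 br A \<and>
           T \<inter> A = {0} \<and> (\<forall>v. \<exists>t\<in>T. \<exists>a\<in>A. v = t + a) \<and>
           stem_on scale br T \<and> abelian_on br A"
proof -
  note L = assms(3)[unfolded lie_superalgebra_def]
  have vs: "vector_space scale" using L by (elim conjE) assumption
  interpret V: vector_space scale by (rule vs)
  have s0: "V.subspace V0" using L by (elim conjE) assumption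
  have s1: "V.subspace V1" using L by (elim conjE) assumption
  have i01: "V0 \<inter> V1 = {0}" using L by (elim conjE) assumption
  have decA: "\<forall>v. \<exists>a\<in>V0. \<exists>b\<in>V1. v = a + b" using L by (elim conjE) assumption
  have dec: "\<And>v. \<exists>a\<in>V0. \<exists>b\<in>V1. v = a + b" using decA by (rule spec)
  have addLR: "\<forall>x y z. br (x + y) z = br x z + br y z \<and> br x (y + z) = br x y + br x z"
    using L by (elim conjE) assumption
  have addL: "\<And>x y z. br (x + y) z = br x z + br y z"
    and addR: "\<And>x y z. br x (y + z) = br x y + br x z" using addLR by blast+
  have scLR: "\<forall>c x y. br (scale c x) y = scale c (br x y) \<and> br x (scale c y) = scale c (br x y)"
    using L by (elim conjE) assumption
  have scL: "\<And>c x y. br (scale c x) y = scale c (br x y)"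
    and scR: "\<And>c x y. br x (scale c y) = scale c (br x y)" using scLR by blast+
  have grad: "\<forall>i\<in>{0,1}. \<forall>j\<in>{0,1}. \<forall>x\<in>graded_part V0 V1 i. \<forall>y\<in>graded_part V0 V1 j.
        br x y \<in> graded_part V0 V1 ((i + j) mod 2) \<and>
        br x y = - scale ((-1) ^ (i * j)) (br y x)" using L by (elim conjE) assumption
  have gradm: "\<And>i j x y. i \<in> {0::nat,1} \<Longrightarrow> j \<in> {0::nat,1} \<Longrightarrow> x \<in> graded_part V0 V1 i \<Longrightarrow>
      y \<in> graded_part V0 V1 j \<Longrightarrow> br x y \<in> graded_part V0 V1 ((i + j) mod 2)"
    using grad by blast
  have zL: "\<And>y. br 0 y = 0" using addL[of 0 0] by simp
  have zR: "\<And>x. br x 0 = 0" using addR[of _ 0 0] by simp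
  have g00: "\<And>x y. x \<in> V0 \<Longrightarrow> y \<in> V0 \<Longrightarrow> br x y \<in> V0"
  proof -
    fix x y assume "x \<in> V0" "y \<in> V0"
    then show "br x y \<in> V0" using gradm[of 0 0 x y] by (simp add: graded_part_def)
  qed
  have g01: "\<And>x y. x \<in> V0 \<Longrightarrow> y \<in> V1 \<Longrightarrow> br x y \<in> V1"
  proof -
    fix x y assume "x \<in> V0" "y \<in> V1"
    then show "br x y \<in> V1" using gradm[of 0 1 x y] by (simp add: graded_part_def)
  qed
  have g10: "\<And>x y. x \<in> V1 \<Longrightarrow> y \<in> V0 \<Longrightarrow> br x y \<in> V1"
  proof -
    fix x y assume "x \<in> V1" "y \<in> V0"
    then show "br x y \<in> V1" using gradm[of 1 0 x y] by (simp add: graded_part_def)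
  qed
  have g11: "\<And>x y. x \<in> V1 \<Longrightarrow> y \<in> V1 \<Longrightarrow> br x y \<in> V0"
  proof -
    fix x y assume "x \<in> V1" "y \<in> V1"
    then show "br x y \<in> V0" using gradm[of 1 1 x y] by (simp add: graded_part_def)
  qed
  have asymg: "\<And>i j x y. i \<in> {0,1} \<Longrightarrow> j \<in> {0,1} \<Longrightarrow> x \<in> graded_part V0 V1 i \<Longrightarrow>
      y \<in> graded_part V0 V1 j \<Longrightarrow> br y x = 0 \<Longrightarrow> br x y = 0"
  proof -
    fix i j x y assume h: "i \<in> {0::nat,1}" "j \<in> {0::nat,1}" "x \<in> graded_part V0 V1 i"
      "y \<in> graded_part V0 V1 j" "br y x = 0"
    have "br x y = - scale ((-1) ^ (i * j)) (br y x)" using grad h by blast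
    then show "br x y = 0" using h(5) by simp
  qed
  have asym0: "\<And>x y. x \<in> V0 \<Longrightarrow> br y x = 0 \<Longrightarrow> y \<in> V0 \<or> y \<in> V1 \<Longrightarrow> br x y = 0"
    using asymg[of 0 0] asymg[of 0 1] by (auto simp: graded_part_def)
  have asym1: "\<And>x y. x \<in> V1 \<Longrightarrow> br y x = 0 \<Longrightarrow> y \<in> V0 \<or> y \<in> V1 \<Longrightarrow> br x y = 0"
    using asymg[of 1 0] asymg[of 1 1] by (auto simp: graded_part_def)
  have split0: "\<And>a b. a \<in> V0 \<Longrightarrow> b \<in> V1 \<Longrightarrow> a + b = 0 \<Longrightarrow> a = 0 \<and> b = 0"
  proof -
    fix a b assume h: "a \<in> V0" "b \<in> V1" "a + b = 0"
    then have "a = - b" by (simp add: eq_neg_iff_add_eq_0)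
    then have "a \<in> V1" using V.subspace_neg[OF s1 h(2)] by simp
    then have "a = 0" using h(1) i01 by blast
    then show "a = 0 \<and> b = 0" using h(3) by simp
  qed
  define D where "D = V.span {br x y | x y. True}"
  have Dsub: "V.subspace D" unfolding D_def by simp
  have brD: "\<And>x y. br x y \<in> D" unfolding D_def by (rule V.span_base) blast
  have Dgr: "\<And>d. d \<in> D \<Longrightarrow> \<exists>d0\<in>D \<inter> V0. \<exists>d1\<in>D \<inter> V1. d = d0 + d1"
  proof -
    let ?G = "{a + b | a b. a \<in> D \<inter> V0 \<and> b \<in> D \<inter> V1}"
    have Gs: "V.subspace ?G"
      by (intro V.subspace_sums V.subspace_inter Dsub s0 s1)
    have "{br x y | x y. True} \<subseteq> ?G"
    proof
      fix w assume "w \<in> {br x y | x y. True}"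
      then obtain x y where w: "w = br x y" by blast
      obtain x0 x1 where x: "x0 \<in> V0" "x1 \<in> V1" "x = x0 + x1" using dec by blast
      obtain y0 y1 where y: "y0 \<in> V0" "y1 \<in> V1" "y = y0 + y1" using dec by blast
      have "w = (br x0 y0 + br x1 y1) + (br x0 y1 + br x1 y0)"
        unfolding w x y addL addR by (simp add: add_ac)
      moreover have "br x0 y0 + br x1 y1 \<in> D \<inter> V0"
        using V.subspace_add[OF Dsub brD brD] V.subspace_add[OF s0 g00 g11] x y by blast
      moreover have "br x0 y1 + br x1 y0 \<in> D \<inter> V1"
        using V.subspace_add[OF Dsub brD brD] V.subspace_add[OF s1 g01 g10] x y by blast
      ultimately show "w \<in> ?G" by blast
    qed
    then have DG: "D \<subseteq> ?G" using V.span_minimal[OF _ Gs] by (simp only: D_def)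
    fix d assume "d \<in> D"
    then have "d \<in> ?G" using DG by (rule subsetD[rotated])
    then show "\<exists>d0\<in>D \<inter> V0. \<exists>d1\<in>D \<inter> V1. d = d0 + d1" by blast
  qed
  define Z0 where "Z0 = {z \<in> V0. \<forall>y. br z y = 0 \<and> br y z = 0}"
  define Z1 where "Z1 = {z \<in> V1. \<forall>y. br z y = 0 \<and> br y z = 0}"
  have Z0s: "V.subspace Z0" unfolding Z0_def V.subspace_def
    using V.subspace_0[OF s0] V.subspace_add[OF s0] V.subspace_scale[OF s0] zL zR addL addR scL scR
    by auto
  have Z1s: "V.subspace Z1" unfolding Z1_def V.subspace_def
    using V.subspace_0[OF s1] V.subspace_add[OF s1] V.subspace_scale[OF s1] zL zR addL addR scL scR
    by auto
  obtain A0 T0 where A0T0: "V.subspace A0" "V.subspace T0" "A0 \<subseteq> Z0" "A0 \<inter> D \<subseteq> {0}"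
     "\<forall>z\<in>Z0. \<exists>a\<in>A0. \<exists>d\<in>D \<inter> V0. z = a + d" "D \<inter> V0 \<subseteq> T0" "T0 \<subseteq> V0" "T0 \<inter> A0 \<subseteq> {0}"
     "\<forall>v\<in>V0. \<exists>t\<in>T0. \<exists>a\<in>A0. v = t + a"
    using V.two_complements[OF s0 Z0s _ Dsub] unfolding Z0_def by blast
  obtain A1 T1 where A1T1: "V.subspace A1" "V.subspace T1" "A1 \<subseteq> Z1" "A1 \<inter> D \<subseteq> {0}"
     "\<forall>z\<in>Z1. \<exists>a\<in>A1. \<exists>d\<in>D \<inter> V1. z = a + d" "D \<inter> V1 \<subseteq> T1" "T1 \<subseteq> V1" "T1 \<inter> A1 \<subseteq> {0}"
     "\<forall>v\<in>V1. \<exists>t\<in>T1. \<exists>a\<in>A1. v = t + a"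
    using V.two_complements[OF s1 Z1s _ Dsub] unfolding Z1_def by blast
  define A where "A = {a + b | a b. a \<in> A0 \<and> b \<in> A1}"
  define T where "T = {a + b | a b. a \<in> T0 \<and> b \<in> T1}"
  have As: "V.subspace A" unfolding A_def by (intro V.subspace_sums A0T0(1) A1T1(1))
  have Ts: "V.subspace T" unfolding T_def by (intro V.subspace_sums A0T0(2) A1T1(2))
  have Acen: "\<And>a y. a \<in> A \<Longrightarrow> br y a = 0 \<and> br a y = 0"
  proof -
    fix a y assume "a \<in> A"
    then obtain a0 a1 where "a0 \<in> Z0" "a1 \<in> Z1" "a = a0 + a1" unfolding A_def using A0T0(3) A1T1(3) by blast
    then show "br y a = 0 \<and> br a y = 0" unfolding Z0_def Z1_def by (simp add: addL addR)
  qed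
  have DT: "D \<subseteq> T"
  proof
    fix d assume "d \<in> D"
    then obtain d0 d1 where "d0 \<in> D \<inter> V0" "d1 \<in> D \<inter> V1" "d = d0 + d1" using Dgr by blast
    then show "d \<in> T" unfolding T_def using A0T0(6) A1T1(6) by blast
  qed
  have TAdec: "\<And>v. \<exists>t\<in>T. \<exists>a\<in>A. v = t + a"
  proof -
    fix v
    obtain v0 v1 where v: "v0 \<in> V0" "v1 \<in> V1" "v = v0 + v1" using dec by blast
    obtain t0 a0 where "t0 \<in> T0" "a0 \<in> A0" "v0 = t0 + a0" using A0T0(9) v by blast
    moreover obtain t1 a1 where "t1 \<in> T1" "a1 \<in> A1" "v1 = t1 + a1" using A1T1(9) v by blast
    ultimately have "v = (t0 + t1) + (a0 + a1)" "t0 + t1 \<in> T" "a0 + a1 \<in> A"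
      using v unfolding T_def A_def by (auto simp: add_ac)
    then show "\<exists>t\<in>T. \<exists>a\<in>A. v = t + a" by blast
  qed
  have T0T: "T0 \<subseteq> T" unfolding T_def using V.subspace_0[OF A1T1(2)] by force
  have T1T: "T1 \<subseteq> T" unfolding T_def using V.subspace_0[OF A0T0(2)] by force
  have A0A: "A0 \<subseteq> A" unfolding A_def using V.subspace_0[OF A1T1(1)] by force
  have A1A: "A1 \<subseteq> A" unfolding A_def using V.subspace_0[OF A0T0(1)] by force
  have gT: "graded_ideal scale V0 V1 br T"
    unfolding graded_ideal_def
  proof (intro conjI allI impI ballI Ts)
    fix v assume "v \<in> T"
    then obtain t0 t1 where "t0 \<in> T0" "t1 \<in> T1" "v = t0 + t1" unfolding T_def by blast
    then show "\<exists>a\<in>T \<inter> V0. \<exists>b\<in>T \<inter> V1. v = a + b" using T0T T1T A0T0(7) A1T1(7) by blast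
  next
    fix x y assume "y \<in> T" show "br x y \<in> T" using brD DT by blast
  qed
  have gA: "graded_ideal scale V0 V1 br A"
    unfolding graded_ideal_def
  proof (intro conjI allI impI ballI As)
    fix v assume "v \<in> A"
    then obtain t0 t1 where "t0 \<in> A0" "t1 \<in> A1" "v = t0 + t1" unfolding A_def by blast
    then show "\<exists>a\<in>A \<inter> V0. \<exists>b\<in>A \<inter> V1. v = a + b" using A0A A1A A0T0(3) A1T1(3) unfolding Z0_def Z1_def by blast
  next
    fix x y assume "y \<in> A" then show "br x y \<in> A" using Acen V.subspace_0[OF As] by simp
  qed
  have TA0: "T \<inter> A = {0}"
  proof
    show "{0} \<subseteq> T \<inter> A" using V.subspace_0[OF As] V.subspace_0[OF Ts] by blast
    show "T \<inter> A \<subseteq> {0}"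
    proof
      fix v assume "v \<in> T \<inter> A"
      then obtain t0 t1 a0 a1 where h: "t0 \<in> T0" "t1 \<in> T1" "v = t0 + t1" "a0 \<in> A0" "a1 \<in> A1" "v = a0 + a1"
        unfolding T_def A_def by blast
      have "(t0 - a0) + (t1 - a1) = 0" using h by (simp add: algebra_simps)
      moreover have "t0 - a0 \<in> V0" using h A0T0(3,7) Z0_def V.subspace_diff[OF s0] by blast
      moreover have "t1 - a1 \<in> V1" using h A1T1(3,7) Z1_def V.subspace_diff[OF s1] by blast
      ultimately have "t0 - a0 = 0 \<and> t1 - a1 = 0" using split0 by blast
      then have "t0 = a0" "t1 = a1" by auto
      then have "t0 = 0" "t1 = 0" using h A0T0(8) A1T1(8) by blast+
      then show "v \<in> {0}" using h by simp
    qed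
  qed
  have stem: "stem_on scale br T"
    unfolding stem_on_def
  proof
    fix x assume "x \<in> center_on br T"
    then have xT: "x \<in> T" and xc: "\<And>y. y \<in> T \<Longrightarrow> br x y = 0" unfolding center_on_def by auto
    have xall: "\<And>y. br x y = 0"
    proof -
      fix y obtain t a where "t \<in> T" "a \<in> A" "y = t + a" using TAdec by blast
      then show "br x y = 0" using xc Acen by (simp add: addR)
    qed
    obtain t0 t1 where t: "t0 \<in> T0" "t1 \<in> T1" "x = t0 + t1" using xT unfolding T_def by blast
    have t0V: "t0 \<in> V0" and t1V: "t1 \<in> V1" using t A0T0(7) A1T1(7) by blast+
    have y0: "\<And>y. y \<in> V0 \<Longrightarrow> br t0 y = 0 \<and> br t1 y = 0"
    proof -
      fix y assume "y \<in> V0"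
      have "br t0 y + br t1 y = 0" using xall[of y] t by (simp add: addL)
      then show "br t0 y = 0 \<and> br t1 y = 0" using split0 g00 g10 t0V t1V \<open>y \<in> V0\<close> by blast
    qed
    have y1: "\<And>y. y \<in> V1 \<Longrightarrow> br t0 y = 0 \<and> br t1 y = 0"
    proof -
      fix y assume "y \<in> V1"
      have "br t1 y + br t0 y = 0" using xall[of y] t by (simp add: addL add_ac)
      then show "br t0 y = 0 \<and> br t1 y = 0" using split0 g01 g11 t0V t1V \<open>y \<in> V1\<close> by blast
    qed
    have cen: "\<And>y. br t0 y = 0 \<and> br y t0 = 0 \<and> br t1 y = 0 \<and> br y t1 = 0"
    proof -
      fix y
      obtain y0' y1' where yy: "y0' \<in> V0" "y1' \<in> V1" "y = y0' + y1'" using dec by blast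
      have "br y0' t0 = 0" "br y1' t0 = 0" "br y0' t1 = 0" "br y1' t1 = 0"
        using asym0[of y0' t0] asym0[of y0' t1] asym1[of y1' t0] asym1[of y1' t1] y0 y1 yy t0V t1V
        by auto
      then show "br t0 y = 0 \<and> br y t0 = 0 \<and> br t1 y = 0 \<and> br y t1 = 0"
        using y0 y1 yy by (simp add: addL addR)
    qed
    have "t0 \<in> Z0" using cen t0V unfolding Z0_def by blast
    then obtain a d where ad: "a \<in> A0" "d \<in> D \<inter> V0" "t0 = a + d" using A0T0(5) by blast
    have "a = t0 - d" using ad by simp
    then have "a \<in> T0" using V.subspace_diff[OF A0T0(2) t(1)] ad A0T0(6) by blast
    then have "a = 0" using ad A0T0(8) by blast
    then have t0D: "t0 \<in> D" using ad by simp
    have "t1 \<in> Z1" using cen t1V unfolding Z1_def by blast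
    then obtain a' d' where ad': "a' \<in> A1" "d' \<in> D \<inter> V1" "t1 = a' + d'" using A1T1(5) by blast
    have "a' = t1 - d'" using ad' by simp
    then have "a' \<in> T1" using V.subspace_diff[OF A1T1(2) t(2)] ad' A1T1(6) by blast
    then have "a' = 0" using ad' A1T1(8) by blast
    then have t1D: "t1 \<in> D" using ad' by simp
    have xD: "x \<in> D" using t t0D t1D V.subspace_add[OF Dsub] by simp
    have "{br x y | x y. True} \<subseteq> V.span {br x y | x y. x \<in> T \<and> y \<in> T}"
    proof
      fix w assume "w \<in> {br x y | x y. True}"
      then obtain u v where w: "w = br u v" by blast
      obtain t a where ta: "t \<in> T" "a \<in> A" "u = t + a" using TAdec by blast
      obtain t' a' where ta': "t' \<in> T" "a' \<in> A" "v = t' + a'" using TAdec by blast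
      have "w = br t t'" using w ta ta' Acen by (simp add: addL addR)
      then show "w \<in> V.span {br x y | x y. x \<in> T \<and> y \<in> T}"
        using ta ta' by (intro V.span_base) blast
    qed
    then have "D \<subseteq> V.span {br x y | x y. x \<in> T \<and> y \<in> T}"
      unfolding D_def by (intro V.span_minimal) auto
    then show "x \<in> derived_on scale br T" unfolding derived_on_def using xD by blast
  qed
  have ab: "abelian_on br A" unfolding abelian_on_def using Acen by blast
  show ?thesis
    apply (rule exI[of _ T], rule exI[of _ A])
    using gT gA TA0 TAdec stem ab by simp
qed

end
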